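(* Under the setting of the previous statement (constants $\sigma_w^2>0$, $\gamma>0$, $P_j^{\max}>0$, $0<\lambda<\tilde\lambda$; $P_{FA}$ and $P_{MD}$ as functions of $\tau_{dt}>0$), let the detection error probability be $P_e(\tau_{dt})=P_{FA}(\tau_{dt})+P_{MD}(\tau_{dt})$. Define $$\Delta=\frac{e^{\gamma P_j^{\max}/\lambda}-1}{e^{\gamma P_j^{\max}/\tilde\lambda}-1}.$$ Then the threshold $$\tau_{dt}^*=\frac{\tilde\lambda\lambda}{\tilde\lambda-\lambda}\ln\Delta+\sigma_w^2$$ satisfies $\tau_{dt}^*\in[\sigma_w^2+\gamma P_j^{\max},\infty)$ and minimizes $P_e$ over all $\tau_{dt}>0$, and the minimum value is $$P_e^*=P_e(\tau_{dt}^* )=1-\frac{\tilde\lambda\big(e^{\gamma P_j^{\max}/\tilde\lambda}-1\big)\Delta^{\frac{\lambda}{\lambda-\tilde\lambda}}-\lambda\big(e^{\gamma P_j^{\max}/\lambda}-1\big)\Delta^{\frac{\tilde\lambda}{\lambda-\tilde\lambda}}}{\gamma P_j^{\max}}.$$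
   Context: Setting: $P_j$ is uniform on $[0,P_j^{\max}]$; under $\mathcal H_0$, $\overline P_w=X_0+\gamma P_j+\sigma_w^2$ with $X_0$ exponential of mean $\lambda$ independent of $P_j$; under $\mathcal H_1$, $\overline P_w=X_1+\gamma P_j+\sigma_w^2$ with $X_1$ exponential of mean $\tilde\lambda$ independent of $P_j$. $P_{FA}(\tau_{dt})=\Pr(\overline P_w>\tau_{dt}\mid\mathcal H_0)$ and $P_{MD}(\tau_{dt})=\Pr(\overline P_w<\tau_{dt}\mid\mathcal H_1)$. *)

theory Defs
  imports "HOL-Probability.Probability"
begin

text \<open>Joint law of (X, P_j): X exponential with mean m (rate 1/m),
  P_j uniform on [0, Pmax], independent (product measure).\<close>
definition joint_law :: "real \<Rightarrow> real \<Rightarrow> (real \<times> real) measure" where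
  "joint_law m Pmax =
     density lborel (exponential_density (1 / m)) \<Otimes>\<^sub>M uniform_measure lborel {0..Pmax}"

text \<open>False alarm: Pr(X0 + gamma P_j + sigma2 > tau | H0), X0 of mean lam.\<close>
definition P_FA :: "real \<Rightarrow> real \<Rightarrow> real \<Rightarrow> real \<Rightarrow> real \<Rightarrow> real" where
  "P_FA sigma2 gamma Pmax lam tau =
     measure (joint_law lam Pmax) {(x, p). x + gamma * p + sigma2 > tau}"

text \<open>Missed detection: Pr(X1 + gamma P_j + sigma2 < tau | H1), X1 of mean lamt.\<close>
definition P_MD :: "real \<Rightarrow> real \<Rightarrow> real \<Rightarrow> real \<Rightarrow> real \<Rightarrow> real" where
  "P_MD sigma2 gamma Pmax lamt tau =
     measure (joint_law lamt Pmax) {(x, p). x + gamma * p + sigma2 < tau}"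

definition P_e :: "real \<Rightarrow> real \<Rightarrow> real \<Rightarrow> real \<Rightarrow> real \<Rightarrow> real \<Rightarrow> real" where
  "P_e sigma2 gamma Pmax lam lamt tau =
     P_FA sigma2 gamma Pmax lam tau + P_MD sigma2 gamma Pmax lamt tau"

end

theory Submission
  imports Defs
begin

lemma exp_distr:
  assumes "0 < l"
  shows "distributed (density lborel (exponential_density l)) lborel (\<lambda>x. x) (exponential_density l)"
  unfolding distributed_def
  using assms by (auto simp: distr_id2 exponential_density_def)

lemma slice_gt:
  assumes "0 < l"
  shows "measure (density lborel (exponential_density l)) {x. c < x} = exp (- (max c 0) * l)"
proof -
  interpret prob_space "density lborel (exponential_density l)"
    using prob_space_exponential_density[OF assms] .
  note D = exponential_distributedD_gt[OF exp_distr[OF assms] _ assms]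
  show ?thesis
  proof (cases "0 \<le> c")
    case True
    then show ?thesis using D[of c] by simp
  next
    case False
    have "1 = prob {x. 0 < x}" using D[of 0] by simp
    also have "\<dots> \<le> prob {x. c < x}"
      using False by (intro finite_measure_mono) auto
    finally have "prob {x. c < x} \<ge> 1" .
    moreover have "prob {x. c < x} \<le> 1" by simp
    ultimately have "prob {x. c < x} = 1" by linarith
    then show ?thesis using False by simp
  qed
qed

lemma slice_lt:
  assumes "0 < l"
  shows "measure (density lborel (exponential_density l)) {x. x < c} = 1 - exp (- (max c 0) * l)"
proof -
  interpret prob_space "density lborel (exponential_density l)"
    using prob_space_exponential_density[OF assms] .
  have sing: "prob {c} = 0"
  proof -
    have "AE x in lborel. x \<noteq> c" by (rule AE_I'[where N="{c}"]) auto
    then have "AE x in lborel. x \<in> {c} \<longrightarrow> exponential_density l x = 0"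
      by eventually_elim auto
    then have "{c} \<in> null_sets (density lborel (exponential_density l))"
      by (subst null_sets_density_iff) auto
    then show ?thesis by (simp add: measure_eq_0_null_sets)
  qed
  have "prob {x. x < c} = prob ({x. x < c} \<union> {c})"
    using sing by (subst finite_measure_Union) auto
  also have "{x. x < c} \<union> {c} = UNIV - {x. c < x}" by auto
  also have "prob (UNIV - {x. c < x}) = 1 - prob {x. c < x}"
    using prob_compl[of "{x. c < x}"] by simp
  finally show ?thesis using slice_gt[OF assms, of c] by simp
qed

lemma joint_measure:
  assumes m: "0 < m" and P: "0 < Pmax"
   and S: "S \<in> sets (borel \<Otimes>\<^sub>M borel)"
   and g: "g \<in> borel_measurable borel" "\<And>p. 0 \<le> g p"
   and sl: "\<And>p. p \<in> {0..Pmax} \<Longrightarrow> measure (density lborel (exponential_density (1/m))) ((\<lambda>x. (x,p)) -` S) = g p"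
   and I: "(g has_integral I) {0..Pmax}"
  shows "measure (joint_law m Pmax) S = I / Pmax"
proof -
  define E where "E = density lborel (exponential_density (1/m))"
  define U where "U = uniform_measure lborel {0..Pmax}"
  interpret E: prob_space E unfolding E_def using m by (intro prob_space_exponential_density) simp
  interpret U: prob_space U unfolding U_def using P by (intro prob_space_uniform_measure) auto
  interpret EU: pair_prob_space E U by unfold_locales
  have S': "S \<in> sets (E \<Otimes>\<^sub>M U)"
    using S by (subst sets_pair_measure_cong[of E borel U borel]) (auto simp: E_def U_def)
  have I0: "0 \<le> I" using has_integral_nonneg[OF I] g(2) by auto
  have ir: "((\<lambda>p. g p * indicator {0..Pmax} p) has_integral I) UNIV"
  proof -
    have "(\<lambda>p. g p * indicator {0..Pmax} p) = (\<lambda>p. if p \<in> {0..Pmax} then g p else 0)"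
      by (auto simp: indicator_def)
    then show ?thesis using I has_integral_restrict_UNIV[of "{0..Pmax}" g I] by simp
  qed
  have "emeasure (E \<Otimes>\<^sub>M U) S = (\<integral>\<^sup>+p. emeasure E ((\<lambda>x. (x, p)) -` S) \<partial>U)"
    by (rule EU.emeasure_pair_measure_alt2[OF S'])
  also have "\<dots> = (\<integral>\<^sup>+p. ennreal (g p) \<partial>U)"
  proof (rule nn_integral_cong_AE)
    show "AE p in U. emeasure E ((\<lambda>x. (x, p)) -` S) = ennreal (g p)"
      unfolding U_def
      using sl unfolding E_def[symmetric]
      by (intro AE_uniform_measureI AE_I2) (auto simp: E.emeasure_eq_measure)
  qed
  also have "\<dots> = (\<integral>\<^sup>+p. ennreal (g p) * indicator {0..Pmax} p \<partial>lborel) / emeasure lborel {0..Pmax}"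
    unfolding U_def using g by (intro nn_integral_uniform_measure) auto
  also have "(\<integral>\<^sup>+p. ennreal (g p) * indicator {0..Pmax} p \<partial>lborel) = (\<integral>\<^sup>+p. ennreal (g p * indicator {0..Pmax} p) \<partial>lborel)"
    by (intro nn_integral_cong) (auto simp: indicator_def)
  also have "\<dots> = ennreal I"
    using g by (intro nn_integral_has_integral_lborel[OF _ _ ir]) auto
  also have "ennreal I / emeasure lborel {0..Pmax} = ennreal (I / Pmax)"
    using P I0 by (simp add: divide_ennreal)
  finally show ?thesis
    unfolding joint_law_def E_def[symmetric] U_def[symmetric] measure_def using I0 P by simp
qed

definition Q :: "real \<Rightarrow> real \<Rightarrow> real" where
  "Q m u = min u 0 + m * (1 - exp (- (max u 0) / m))"

definition G :: "real \<Rightarrow> real \<Rightarrow> real" where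
  "G m u = exp (- (max u 0) / m)"

lemma Q_deriv:
  assumes m: "0 < m" and u: "u \<noteq> 0"
  shows "(Q m has_real_derivative G m u) (at u)"
proof (cases "u < 0")
  case True
  have "((\<lambda>x. x) has_real_derivative 1) (at u)" by (rule DERIV_ident)
  moreover have "G m u = 1" using True by (simp add: G_def)
  ultimately have "((\<lambda>x. x) has_real_derivative G m u) (at u)" by simp
  then show ?thesis
    by (rule has_field_derivative_transform_within_open[where S="{..<0}"])
       (use True in \<open>auto simp: Q_def G_def\<close>)
next
  case False
  then have u0: "0 < u" using u by simp
  have "((\<lambda>x. m * (1 - exp (- x / m))) has_real_derivative m * (0 - exp (- u / m) * (- 1 / m))) (at u)"
    using m by (intro derivative_eq_intros) auto
  then have "((\<lambda>x. m * (1 - exp (- x / m))) has_real_derivative G m u) (at u)"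
    using m u0 by (simp add: G_def)
  then show ?thesis
    by (rule has_field_derivative_transform_within_open[where S="{0<..}"])
       (use u0 in \<open>auto simp: Q_def G_def\<close>)
qed

lemma Q_cont: "0 < m \<Longrightarrow> continuous_on A (Q m)"
  unfolding Q_def by (intro continuous_intros) auto

lemma G_integral:
  assumes m: "0 < m" and gam: "0 < gam" and P: "0 < Pmax"
  shows "((\<lambda>p. G m (t - gam * p)) has_integral (Q m t - Q m (t - gam * Pmax)) / gam) {0..Pmax}"
proof -
  define F where "F p = - Q m (t - gam * p) / gam" for p
  have "((\<lambda>p. G m (t - gam * p)) has_integral (F Pmax - F 0)) {0..Pmax}"
  proof (rule fundamental_theorem_of_calculus_interior_strong[where S="{t / gam}"])
    fix p assume p: "p \<in> {0<..<Pmax} - {t / gam}"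
    then have ne: "t - gam * p \<noteq> 0" using gam by (auto simp: field_simps)
    have d: "((\<lambda>p. t - gam * p) has_real_derivative (0 - gam * 1)) (at p)"
      by (intro derivative_eq_intros) auto
    have "((\<lambda>p. Q m (t - gam * p)) has_real_derivative G m (t - gam * p) * (0 - gam * 1)) (at p)"
      by (rule DERIV_chain2[OF Q_deriv[OF m ne] d])
    then have "((\<lambda>p. - Q m (t - gam * p) / gam) has_real_derivative - (G m (t - gam * p) * (0 - gam * 1)) / gam) (at p)"
      by (intro DERIV_cdivide DERIV_minus)
    then show "(F has_vector_derivative G m (t - gam * p)) (at p)"
      using gam by (simp add: F_def[abs_def] has_real_derivative_iff_has_vector_derivative[symmetric])
  next
    show "continuous_on {0..Pmax} F" unfolding F_def
      by (intro continuous_intros continuous_on_compose2[OF Q_cont[OF m, of UNIV]]) (use gam in auto)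
  qed (use P in auto)
  also have "F Pmax - F 0 = (Q m t - Q m (t - gam * Pmax)) / gam"
    by (simp add: F_def diff_divide_distrib)
  finally show ?thesis .
qed

lemma G_meas: "(\<lambda>p. G m (t - gam * p)) \<in> borel_measurable borel"
  unfolding G_def by measurable

lemma S_meas: "{(x, p). (x::real) + gam * p + s > (tau::real)} \<in> sets (borel \<Otimes>\<^sub>M borel)"
proof -
  have "{(x, p). (x::real) + gam * p + s > (tau::real)} = {z \<in> space (borel \<Otimes>\<^sub>M borel). tau < fst z + gam * snd z + s}"
    by (auto simp: space_pair_measure)
  also have "\<dots> \<in> sets (borel \<Otimes>\<^sub>M borel)" by measurable
  finally show ?thesis .
qed

lemma S_meas2: "{(x, p). (x::real) + gam * p + s < (tau::real)} \<in> sets (borel \<Otimes>\<^sub>M borel)"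
proof -
  have "{(x, p). (x::real) + gam * p + s < (tau::real)} = {z \<in> space (borel \<Otimes>\<^sub>M borel). fst z + gam * snd z + s < tau}"
    by (auto simp: space_pair_measure)
  also have "\<dots> \<in> sets (borel \<Otimes>\<^sub>M borel)" by measurable
  finally show ?thesis .
qed

lemma phi_min:
  fixes a lam lamt A B ts :: real
  assumes a: "0 < a" and l: "0 < lam" "lam < lamt"
  defines "A \<equiv> exp (a / lam) - 1" and "B \<equiv> exp (a / lamt) - 1"
  defines "ts \<equiv> lamt * lam / (lamt - lam) * ln (A / B)"
  defines "phi \<equiv> \<lambda>t. lam * A * exp (- t / lam) - lamt * B * exp (- t / lamt)"
  shows "phi ts \<le> phi t"
proof -
  have A: "0 < A" unfolding A_def using a l by simp
  have B: "0 < B" unfolding B_def using a l by simp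
  define k where "k = (lamt - lam) / (lam * lamt)"
  have k: "0 < k" using l by (simp add: k_def)
  have k1: "1 / lam - 1 / lamt = k" using l by (simp add: k_def field_simps)
  have tsk: "ts * k = ln A - ln B"
    using l A B by (simp add: ts_def k_def ln_div)
  have dphi: "(phi has_real_derivative (B * exp (- x / lamt) - A * exp (- x / lam))) (at x)" for x
  proof -
    have "(phi has_real_derivative (lam * A * (exp (- x / lam) * (- 1 / lam)) - lamt * B * (exp (- x / lamt) * (- 1 / lamt)))) (at x)"
    proof -
      have e: "((\<lambda>t. exp (- t / m)) has_real_derivative exp (- x / m) * (- 1 / m)) (at x)" for m :: real
      proof -
        have "((\<lambda>t. - t / m) has_real_derivative - 1 / m) (at x)"
          using DERIV_cdivide[OF DERIV_minus[OF DERIV_ident], of m x] by simp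
        from DERIV_chain2[OF DERIV_exp this] show ?thesis .
      qed
      show ?thesis unfolding phi_def
        by (intro DERIV_diff DERIV_cmult e)
    qed
    moreover have "lam * A * (exp (- x / lam) * (- 1 / lam)) - lamt * B * (exp (- x / lamt) * (- 1 / lamt)) = B * exp (- x / lamt) - A * exp (- x / lam)"
      using l by simp
    ultimately show ?thesis by simp
  qed
  have gform: "B * exp (- x / lamt) - A * exp (- x / lam) = exp (ln A + - x / lam + (x - ts) * k) - exp (ln A + - x / lam)" for x
  proof -
    have e1: "B * exp (- x / lamt) = exp (ln B + - x / lamt)" using B by (simp only: exp_add exp_ln)
    have e2: "A * exp (- x / lam) = exp (ln A + - x / lam)" using A by (simp only: exp_add exp_ln)
    have "x * k = x / lam - x / lamt" by (simp add: k1[symmetric] right_diff_distrib)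
    then have "ln B + - x / lamt = ln A + - x / lam + (x - ts) * k"
      using tsk by (simp add: left_diff_distrib)
    then show ?thesis using e1 e2 by simp
  qed
  show ?thesis
  proof (cases "t \<le> ts")
    case True
    show ?thesis
    proof (rule deriv_nonpos_imp_antimono[OF dphi _ True])
      fix x assume "x \<in> {t..ts}"
      then have "(x - ts) * k \<le> 0" using k by (simp add: mult_nonpos_nonneg)
      then show "B * exp (- x / lamt) - A * exp (- x / lam) \<le> 0" unfolding gform by simp
    qed
  next
    case False
    show ?thesis
    proof (rule deriv_nonneg_imp_mono[OF dphi])
      fix x assume "x \<in> {ts..t}"
      then have "0 \<le> (x - ts) * k" using k by simp
      then show "0 \<le> B * exp (- x / lamt) - A * exp (- x / lam)" unfolding gform by simp
    qed (use False in simp)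
  qed
qed

lemma PFA_eq:
  assumes gam: "0 < gam" and P: "0 < Pmax" and l: "0 < lam"
  shows "P_FA s gam Pmax lam tau = (Q lam (tau - s) - Q lam (tau - s - gam * Pmax)) / gam / Pmax"
  unfolding P_FA_def
proof (rule joint_measure[where g="\<lambda>p. G lam (tau - s - gam * p)", OF l P S_meas G_meas])
  show "0 \<le> G lam (tau - s - gam * p)" for p by (simp add: G_def)
  show "measure (density lborel (exponential_density (1 / lam))) ((\<lambda>x. (x, p)) -` {(x, p). tau < x + gam * p + s}) = G lam (tau - s - gam * p)" for p
  proof -
    have "(\<lambda>x. (x, p)) -` {(x, p). tau < x + gam * p + s} = {x. tau - s - gam * p < x}" by auto
    then show ?thesis using slice_gt[of "1/lam" "tau - s - gam * p"] l by (simp add: G_def)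
  qed
  show "((\<lambda>p. G lam (tau - s - gam * p)) has_integral (Q lam (tau - s) - Q lam (tau - s - gam * Pmax)) / gam) {0..Pmax}"
    by (rule G_integral[OF l gam P])
qed

lemma G_le1: "0 < m \<Longrightarrow> G m u \<le> 1"
  by (simp add: G_def)

lemma PMD_eq:
  assumes gam: "0 < gam" and P: "0 < Pmax" and l: "0 < lam"
  shows "P_MD s gam Pmax lam tau = (Pmax - (Q lam (tau - s) - Q lam (tau - s - gam * Pmax)) / gam) / Pmax"
  unfolding P_MD_def
proof (rule joint_measure[where g="\<lambda>p. 1 - G lam (tau - s - gam * p)", OF l P S_meas2])
  show "(\<lambda>p. 1 - G lam (tau - s - gam * p)) \<in> borel_measurable borel"
    using G_meas by measurable
  show "0 \<le> 1 - G lam (tau - s - gam * p)" for p using G_le1[OF l] by simp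
  show "measure (density lborel (exponential_density (1 / lam))) ((\<lambda>x. (x, p)) -` {(x, p). x + gam * p + s < tau}) = 1 - G lam (tau - s - gam * p)" for p
  proof -
    have "(\<lambda>x. (x, p)) -` {(x, p). x + gam * p + s < tau} = {x. x < tau - s - gam * p}" by auto
    then show ?thesis using slice_lt[of "1/lam" "tau - s - gam * p"] l by (simp add: G_def)
  qed
  have "((\<lambda>p. 1) has_integral Pmax) {0..Pmax}"
    using has_integral_const_real[of "1::real" 0 Pmax] P by simp
  then show "((\<lambda>p. 1 - G lam (tau - s - gam * p)) has_integral (Pmax - (Q lam (tau - s) - Q lam (tau - s - gam * Pmax)) / gam)) {0..Pmax}"
    by (intro has_integral_diff G_integral[OF l gam P])
qed

lemma Q_neg: "u \<le> 0 \<Longrightarrow> Q m u = u"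
  by (simp add: Q_def)

lemma Q_pos: "0 \<le> u \<Longrightarrow> Q m u = m * (1 - exp (- u / m))"
  by (simp add: Q_def)

lemma Q_diff_big:
  assumes "0 < a" "a \<le> t" "0 < m"
  shows "Q m t - Q m (t - a) = m * (exp (a / m) - 1) * exp (- t / m)"
proof -
  have "exp (- (t - a) / m) = exp (a / m) * exp (- t / m)"
    by (simp add: exp_add[symmetric] diff_divide_distrib)
  then show ?thesis using assms by (simp add: Q_pos algebra_simps)
qed

lemma expneg_deriv: "((\<lambda>t. exp (- t / m)) has_real_derivative exp (- x / m) * (- 1 / m)) (at x)"
proof -
  have "((\<lambda>t. - t / m) has_real_derivative - 1 / m) (at x)"
    using DERIV_cdivide[OF DERIV_minus[OF DERIV_ident], of m x] by simp
  from DERIV_chain2[OF DERIV_exp this] show ?thesis .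
qed

theorem theorem2:
  fixes sigma2 gamma Pmax lam lamt :: real
  assumes "sigma2 > 0" and "gamma > 0" and "Pmax > 0" and "0 < lam" and "lam < lamt"
  defines "Delta \<equiv> (exp (gamma * Pmax / lam) - 1) / (exp (gamma * Pmax / lamt) - 1)"
  defines "tau_star \<equiv> lamt * lam / (lamt - lam) * ln Delta + sigma2"
  shows "tau_star \<in> {sigma2 + gamma * Pmax..} \<and>
    (\<forall>tau > 0. P_e sigma2 gamma Pmax lam lamt tau_star \<le> P_e sigma2 gamma Pmax lam lamt tau) \<and>
    P_e sigma2 gamma Pmax lam lamt tau_star =
           1 - (lamt * (exp (gamma * Pmax / lamt) - 1) * Delta powr (lam / (lam - lamt))
                - lam * (exp (gamma * Pmax / lam) - 1) * Delta powr (lamt / (lam - lamt)))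
               / (gamma * Pmax)"
proof -
  note gam = \<open>gamma > 0\<close> and P = \<open>Pmax > 0\<close> and l = \<open>0 < lam\<close> \<open>lam < lamt\<close>
  define a where "a = gamma * Pmax"
  have a: "0 < a" using gam P by (simp add: a_def)
  define A where "A = exp (a / lam) - 1"
  define B where "B = exp (a / lamt) - 1"
  have A: "0 < A" unfolding A_def using a l by simp
  have B: "0 < B" unfolding B_def using a l by simp
  have lt: "0 < lamt" using l by simp
  have DAB: "Delta = A / B" by (simp add: Delta_def A_def B_def a_def)
  have D0: "0 < Delta" using A B DAB by simp
  define ts where "ts = lamt * lam / (lamt - lam) * ln (A / B)"
  have tau_ts: "tau_star = ts + sigma2" by (simp add: tau_star_def ts_def DAB)
  define phi where "phi = (\<lambda>t. lam * A * exp (- t / lam) - lamt * B * exp (- t / lamt))"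
  define W where "W = (\<lambda>t. Q lam t - Q lam (t - a) - (Q lamt t - Q lamt (t - a)))"
  have Pe: "P_e sigma2 gamma Pmax lam lamt tau = 1 + W (tau - sigma2) / a" for tau
  proof -
    have "P_e sigma2 gamma Pmax lam lamt tau =
        (Q lam (tau - sigma2) - Q lam (tau - sigma2 - gamma * Pmax)) / gamma / Pmax
      + (Pmax - (Q lamt (tau - sigma2) - Q lamt (tau - sigma2 - gamma * Pmax)) / gamma) / Pmax"
      unfolding P_e_def using PFA_eq[OF gam P l(1)] PMD_eq[OF gam P lt] by simp
    also have "\<dots> = 1 + W (tau - sigma2) / a"
      using gam P unfolding W_def a_def by (simp add: field_simps)
    finally show ?thesis .
  qed
  have phimin: "phi ts \<le> phi t" for t
    using phi_min[OF a l, of t] unfolding phi_def ts_def A_def B_def by simp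
  have Wbig: "a \<le> t \<Longrightarrow> W t = phi t" for t
    unfolding W_def phi_def A_def B_def using Q_diff_big[OF a _ l(1), of t] Q_diff_big[OF a _ lt, of t]
    by simp
  define D where "D = (\<lambda>u. lam * (1 - exp (- u / lam)) - lamt * (1 - exp (- u / lamt)))"
  have Wmid: "0 \<le> t \<Longrightarrow> t \<le> a \<Longrightarrow> W t = D t" for t
    unfolding W_def D_def by (simp add: Q_pos Q_neg)
  have Wneg: "t \<le> 0 \<Longrightarrow> W t = 0" for t
    unfolding W_def using a by (simp add: Q_neg)
  have Dmono: "D a \<le> D t" if "0 \<le> t" "t \<le> a" for t
  proof (rule deriv_nonpos_imp_antimono[where g'="\<lambda>u. exp (- u / lam) - exp (- u / lamt)" and g=D and a=t and b=a])
    fix x :: real assume "x \<in> {t..a}"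
    have "(D has_real_derivative lam * (0 - exp (- x / lam) * (- 1 / lam)) - lamt * (0 - exp (- x / lamt) * (- 1 / lamt))) (at x)"
      unfolding D_def by (intro DERIV_diff DERIV_cmult DERIV_const expneg_deriv)
    then show "(D has_real_derivative exp (- x / lam) - exp (- x / lamt)) (at x)"
      using l lt by simp
  next
    fix x assume "x \<in> {t..a}"
    then have x: "0 \<le> x" using that by simp
    have "x / lamt \<le> x / lam" using x l by (simp add: divide_left_mono)
    then show "exp (- x / lam) - exp (- x / lamt) \<le> 0" by simp
  qed (use that in simp)
  have D00: "D 0 = 0" by (simp add: D_def)
  have tsa: "a \<le> ts"
  proof -
    have e: "exp (a / lam - a / lamt) * B \<le> A"
    proof -
      have "1 \<le> exp (a / lam - a / lamt)"
        using a l by (simp add: divide_left_mono)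
      moreover have "exp (a / lam - a / lamt) * B = exp (a / lam) - exp (a / lam - a / lamt)"
        unfolding B_def by (simp add: exp_diff field_simps)
      ultimately show ?thesis unfolding A_def by simp
    qed
    then have "exp (a / lam - a / lamt) \<le> A / B" using B by (simp add: pos_le_divide_eq)
    then have "a / lam - a / lamt \<le> ln (A / B)" using A B by (simp add: ln_ge_iff)
    then have "lamt * lam / (lamt - lam) * (a / lam - a / lamt) \<le> ts"
      unfolding ts_def using l by (intro mult_left_mono) auto
    moreover have "lamt * lam / (lamt - lam) * (a / lam - a / lamt) = a"
      using l lt by (simp add: field_simps)
    ultimately show ?thesis by simp
  qed
  have Wts: "W ts = phi ts" using Wbig tsa by simp
  have Wa: "D a = phi a" using Wbig[of a] Wmid[of a] a by simp
  have allmin: "phi ts \<le> W t" for t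
  proof (cases "a \<le> t")
    case True then show ?thesis using Wbig phimin by simp
  next
    case False
    show ?thesis
    proof (cases "0 \<le> t")
      case True
      have "W t = D t" using True False Wmid by simp
      moreover have "D a \<le> D t" using True False Dmono by simp
      ultimately show ?thesis using phimin[of a] Wa by linarith
    next
      case F2: False
      then show ?thesis using Wneg Dmono[of 0] D00 phimin[of a] Wa a by simp
    qed
  qed
  have part1: "tau_star \<in> {sigma2 + gamma * Pmax..}" using tsa tau_ts a_def by simp
  have part2: "\<forall>tau > 0. P_e sigma2 gamma Pmax lam lamt tau_star \<le> P_e sigma2 gamma Pmax lam lamt tau"
  proof (intro allI impI)
    fix tau :: real
    have "W (tau_star - sigma2) \<le> W (tau - sigma2)" using allmin Wts tau_ts by simp
    then show "P_e sigma2 gamma Pmax lam lamt tau_star \<le> P_e sigma2 gamma Pmax lam lamt tau"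
      unfolding Pe using a by (simp add: divide_right_mono)
  qed
  have p1: "exp (- ts / lam) = Delta powr (lamt / (lam - lamt))"
  proof -
    have "- ts / lam = lamt / (lam - lamt) * ln Delta"
      unfolding ts_def DAB[symmetric] using l lt by (simp add: field_simps)
    then show ?thesis using D0 by (simp add: powr_def)
  qed
  have p2: "exp (- ts / lamt) = Delta powr (lam / (lam - lamt))"
  proof -
    have "- ts / lamt = lam / (lam - lamt) * ln Delta"
      unfolding ts_def DAB[symmetric] using l lt by (simp add: field_simps)
    then show ?thesis using D0 by (simp add: powr_def)
  qed
  have part3: "P_e sigma2 gamma Pmax lam lamt tau_star =
           1 - (lamt * (exp (gamma * Pmax / lamt) - 1) * Delta powr (lam / (lam - lamt))
                - lam * (exp (gamma * Pmax / lam) - 1) * Delta powr (lamt / (lam - lamt)))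
               / (gamma * Pmax)"
  proof -
    have "P_e sigma2 gamma Pmax lam lamt tau_star = 1 + phi ts / a"
      unfolding Pe using Wts tau_ts by simp
    also have "\<dots> = 1 - (lamt * B * exp (- ts / lamt) - lam * A * exp (- ts / lam)) / a"
      unfolding phi_def by (simp add: diff_divide_distrib)
    finally show ?thesis unfolding p1 p2 A_def B_def a_def by simp
  qed
  show ?thesis using part1 part2 part3 by blast
qed

end
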